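(* Let $(L,\wedge,\vee,0,1)$ be a bounded lattice. Then its additive Nakano mosaic $(L,\boxplus,0)$, where $x\boxplus y:=\{z\in L\mid x\vee y=x\vee z=z\vee y\}$, is an L-mosaic.
   Context: For a multioperation $\boxplus:A\times A\to\wp(A)$ and subsets $X,Y$, $X\boxplus Y:=\bigcup_{x\in X,y\in Y}x\boxplus y$. A commutative mosaic $(A,\boxplus,e)$: $x\boxplus y=y\boxplus x$, $e\boxplus x=\{x\}$ for all $x$, and for some endofunction $\rho$, $z\in x\boxplus y$ implies $x\in z\boxplus\rho(y)$ and $y\in\rho(x)\boxplus z$. An L-mosaic is a commutative mosaic $(A,\boxplus,0)$ such that: (Lms1) $0,x\in x\boxplus x$ for all $x$; (Lms2) $(x\boxplus x)\boxplus(x\boxplus x)=x\boxplus x$ for all $x$; (Lms3) $(x\boxplus(x\boxplus y))\cap((x\boxplus y)\boxplus y)\subseteq x\boxplus y$ for all $x,y$; (Lms4) for all $x,y$ there is a unique $z\in x\boxplus y$ with $x,y\in z\boxplus z$. *)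

theory Defs
  imports Main
begin

definition set_mop :: "('a \<Rightarrow> 'a \<Rightarrow> 'a set) \<Rightarrow> 'a set \<Rightarrow> 'a set \<Rightarrow> 'a set" where
  "set_mop m X Y = (\<Union>x\<in>X. \<Union>y\<in>Y. m x y)"

definition comm_mosaic :: "('a \<Rightarrow> 'a \<Rightarrow> 'a set) \<Rightarrow> 'a \<Rightarrow> bool" where
  "comm_mosaic m e \<longleftrightarrow>
     (\<forall>x y. m x y = m y x) \<and>
     (\<forall>x. m e x = {x}) \<and>
     (\<exists>\<rho> :: 'a \<Rightarrow> 'a. \<forall>x y z. z \<in> m x y \<longrightarrow> x \<in> m z (\<rho> y) \<and> y \<in> m (\<rho> x) z)"

definition L_mosaic :: "('a \<Rightarrow> 'a \<Rightarrow> 'a set) \<Rightarrow> 'a \<Rightarrow> bool" where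
  "L_mosaic m e \<longleftrightarrow>
     comm_mosaic m e \<and>
     (\<forall>x. e \<in> m x x \<and> x \<in> m x x) \<and>
     (\<forall>x. set_mop m (m x x) (m x x) = m x x) \<and>
     (\<forall>x y. set_mop m {x} (m x y) \<inter> set_mop m (m x y) {y} \<subseteq> m x y) \<and>
     (\<forall>x y. \<exists>!z. z \<in> m x y \<and> x \<in> m z z \<and> y \<in> m z z)"

definition nakano_add :: "'a::bounded_lattice \<Rightarrow> 'a \<Rightarrow> 'a set" where
  "nakano_add x y = {z. sup x y = sup x z \<and> sup x z = sup z y}"

end

theory Submission
  imports Defs
begin

lemma na_iff: "z \<in> nakano_add x y \<longleftrightarrow> sup x y = sup x z \<and> sup x z = sup z y"
  by (simp add: nakano_add_def)

lemma na_diag: "nakano_add x x = {z. z \<le> x}"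
  by (auto simp: nakano_add_def sup.absorb_iff1 sup_commute)

lemma na_le: "z \<in> nakano_add x y \<Longrightarrow> z \<le> sup x y"
  by (simp add: nakano_add_def)

theorem mainTheorem8:
  shows "L_mosaic (nakano_add :: 'a::bounded_lattice \<Rightarrow> 'a \<Rightarrow> 'a set) bot"
proof -
  have comm: "\<And>x y::'a. nakano_add x y = nakano_add y x"
    by (auto simp: nakano_add_def sup_commute)
  have unit: "\<And>x::'a. nakano_add bot x = {x}"
    by (auto simp: nakano_add_def sup_commute)
  have rho: "\<forall>x y z::'a. z \<in> nakano_add x y \<longrightarrow> x \<in> nakano_add z (id y) \<and> y \<in> nakano_add (id x) z"
    by (auto simp: nakano_add_def sup_commute)
  have cm: "comm_mosaic (nakano_add :: 'a \<Rightarrow> 'a \<Rightarrow> 'a set) bot"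
    unfolding comm_mosaic_def using comm unit rho by blast
  have l2: "set_mop nakano_add (nakano_add x x) (nakano_add x x) = nakano_add x x" for x :: 'a
  proof
    show "set_mop nakano_add (nakano_add x x) (nakano_add x x) \<subseteq> nakano_add x x"
    proof
      fix w assume "w \<in> set_mop nakano_add (nakano_add x x) (nakano_add x x)"
      then obtain a b where ab: "a \<le> x" "b \<le> x" "w \<in> nakano_add a b"
        unfolding set_mop_def na_diag by blast
      have "w \<le> sup a b" using na_le[OF ab(3)] .
      also have "\<dots> \<le> x" using ab by simp
      finally show "w \<in> nakano_add x x" by (simp add: na_diag)
    qed
    show "nakano_add x x \<subseteq> set_mop nakano_add (nakano_add x x) (nakano_add x x)"
    proof
      fix w assume w: "w \<in> nakano_add x x"
      have "w \<in> nakano_add w bot" using unit[of w] comm[of w bot] by simp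
      moreover have "bot \<in> nakano_add x x" by (simp add: na_diag)
      ultimately show "w \<in> set_mop nakano_add (nakano_add x x) (nakano_add x x)"
        unfolding set_mop_def using w by blast
    qed
  qed
  have l3: "set_mop nakano_add {x} (nakano_add x y) \<inter> set_mop nakano_add (nakano_add x y) {y} \<subseteq> nakano_add x y" for x y :: 'a
  proof
    fix w assume "w \<in> set_mop nakano_add {x} (nakano_add x y) \<inter> set_mop nakano_add (nakano_add x y) {y}"
    then obtain u v where u: "u \<in> nakano_add x y" "w \<in> nakano_add x u"
      and v: "v \<in> nakano_add x y" "w \<in> nakano_add v y"
      by (auto simp: set_mop_def)
    have "sup x w = sup x y" using u by (simp add: na_iff)
    moreover have "sup w y = sup x y" using v by (simp add: na_iff)
    ultimately show "w \<in> nakano_add x y" by (simp add: na_iff)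
  qed
  have l4: "\<exists>!z. z \<in> nakano_add x y \<and> x \<in> nakano_add z z \<and> y \<in> nakano_add z z" for x y :: 'a
  proof (rule ex1I[of _ "sup x y"])
    show "sup x y \<in> nakano_add x y \<and> x \<in> nakano_add (sup x y) (sup x y) \<and> y \<in> nakano_add (sup x y) (sup x y)"
      by (simp add: na_iff na_diag sup_assoc sup_commute sup_left_commute)
    fix z assume "z \<in> nakano_add x y \<and> x \<in> nakano_add z z \<and> y \<in> nakano_add z z"
    then have "z \<in> nakano_add x y" "x \<le> z" "y \<le> z" by (auto simp: na_diag)
    then show "z = sup x y" using na_le[of z x y] by (simp add: antisym)
  qed
  show ?thesis unfolding L_mosaic_def
    using cm l2 l3 l4 by (simp add: na_diag)
qed

end
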